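(* For every $t\ge 0$, every $k\ge 1$ and every collection $\Omega$ of functions, $$\rho_1\bigl(\mathsf{vwl}_k^{(t)}\bigr)=\rho_1\bigl(\mathsf{TL}_{k+1}^{(t)}(\Omega)\bigr).$$
   Context: Fix integers $n\ge 1$ and $\ell\ge 1$. A graph is a triple $G=(V_G,E_G,\mathrm{col}_G)$ with $V_G=[n]=\{1,\dots,n\}$, $E_G$ a set of unordered pairs of distinct vertices (undirected, no loops), and a vertex labelling $\mathrm{col}_G:V_G\to\mathbb R^\ell$; $N_G(v)=\{u:uv\in E_G\}$. Let $\mathcal G=\mathcal G_0$ be the set of all such graphs and, for $s\ge 1$, $\mathcal G_s=\{(G,\mathbf v):G\in\mathcal G,\ \mathbf v\in V_G^s\}$. Tensor language $\mathsf{TL}(\Omega)$: let $\Omega$ be a collection of functions, each of the form $f:\mathbb R^p\to\mathbb R$ for some $p\ge1$ depending on $f$. Expressions are generated by $\varphi::=\mathbf 1_{x=y}\mid \mathbf 1_{x\neq y}\mid E(x,y)\mid P_s(x)\mid \varphi\cdot\varphi\mid \varphi+\varphi\mid a\cdot\varphi\mid f(\varphi_1,\dots,\varphi_p)\mid \sum_x\varphi$, with $x,y$ index variables, $s\in[\ell]$, $a\in\mathbb R$, $f\in\Omega$ of arity $p$. Free variables: $\mathrm{free}(\mathbf 1_{x\,\mathrm{op}\,y})=\mathrm{free}(E(x,y))=\{x,y\}$, $\mathrm{free}(P_s(x))=\{x\}$; for $\varphi_1\cdot\varphi_2$, $\varphi_1+\varphi_2$, $f(\varphi_1,\dots,\varphi_p)$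 the union of the components' free variables; $\mathrm{free}(a\cdot\varphi)=\mathrm{free}(\varphi)$; $\mathrm{free}(\sum_x\varphi)=\mathrm{free}(\varphi)\setminus\{x\}$. Semantics: for a graph $G$ and a valuation $\nu$ mapping variables to $V_G$: $[\![E(x,y)]\!]^\nu_G=1$ if $\nu(x)\nu(y)\in E_G$ and $0$ otherwise; $[\![P_s(x)]\!]^\nu_G=\mathrm{col}_G(\nu(x))_s$; $[\![\mathbf 1_{x\,\mathrm{op}\,y}]\!]^\nu_G=1$ if $\nu(x)\,\mathrm{op}\,\nu(y)$ and $0$ otherwise; $\cdot$, $+$, scalar multiplication and $f$ act on the values of the components; $[\![\sum_x\varphi]\!]^\nu_G=\sum_{v\in V_G}[\![\varphi]\!]^{\nu[x\mapsto v]}_G$. For $\varphi$ with free variables among $x_1,\dots,x_s$ and $\mathbf v\in V_G^s$, $[\![\varphi]\!]^{\mathbf v}_G$ denotes the value under $x_i\mapsto v_i$. Summation depth $\mathrm{sd}$: $0$ for atoms, maximum over the components for $\cdot$, $+$, $f(\dots)$, $\mathrm{sd}(a\cdot\varphi)=\mathrm{sd}(\varphi)$, $\mathrm{sd}(\sum_x\varphi)=\mathrm{sd}(\varphi)+1$. $\mathsf{TL}_k(\Omega)$ is the set of expressions in which only variables from $\{x_1,\dots,x_k\}$ occur (free or bound; variables may be re-bound), and $\mathsf{TL}_k^{(t)}(\Omega)$ its subset of summation depth at most $t$. Separation power: for a set $\mathcal F$ of functions $f:\mathcal G_s\to\mathbb R^{m_f}$, $\rho_s(\mathcal F)=\{((G,\mathbf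 v),(H,\mathbf w))\in\mathcal G_s\times\mathcal G_s: f(G,\mathbf v)=f(H,\mathbf w)\ \forall f\in\mathcal F\}$ (for $s=0$, pairs of graphs), and $\rho_s(f)=\rho_s(\{f\})$. For a set $\mathcal L$ of expressions, $\rho_s(\mathcal L)$ is the set of pairs with $[\![\varphi]\!]^{\mathbf v}_G=[\![\varphi]\!]^{\mathbf w}_H$ for all $\varphi\in\mathcal L$ whose free variables are among $x_1,\dots,x_s$ (for $s=0$: all closed expressions in $\mathcal L$). $k$-dimensional Weisfeiler–Leman ($k\ge1$): for $\mathbf v\in V_G^k$, the atomic type $\mathsf{atp}_k(G,\mathbf v)$ records, for all $1\le i<j\le k$, whether $v_i=v_j$ and whether $v_iv_j\in E_G$, together with $\mathrm{col}_G(v_i)$ for all $i\in[k]$. Set $\mathsf{wl}_k^{(0)}(G,\mathbf v)=\mathsf{atp}_k(G,\mathbf v)$ and $\mathsf{wl}_k^{(t+1)}(G,\mathbf v)=\bigl(\mathsf{wl}_k^{(t)}(G,\mathbf v),\{\!\{(\mathsf{atp}_{k+1}(G,(v_1,\dots,v_k,u)),\mathsf{wl}_k^{(t)}(G,\mathbf v[u/1]),\dots,\mathsf{wl}_k^{(t)}(G,\mathbf v[u/k])):u\in V_G\}\!\}\bigr)$, where $\mathbf v[u/i]$ replaces the $i$-th entry of $\mathbf v$ by $u$ and $\{\!\{\cdot\}\!\}$ denotes a multiset. Labels are compared as formal objects across graphs. $\mathsf{vwl}_k^{(t)}(G,v)=\mathsf{wl}_k^{(t)}(G,(v,\dots,v))$.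 $\rho_1(\mathsf{vwl}_k^{(t)})$ is the set of pairs $((G,v),(H,w))$ with $\mathsf{vwl}_k^{(t)}(G,v)=\mathsf{vwl}_k^{(t)}(H,w)$. *)

theory Defs
  imports Complex_Main "HOL-Library.Multiset"
begin

text \<open>A graph is given by its edge set (a set of 2-element subsets of {1..n}) and a
vertex labelling col, where col v is a real list of length l (an element of R^l)
for v in {1..n}; col is extensional (the empty list outside the vertex set).\<close>

record graph =
  edges :: "nat set set"
  col   :: "nat \<Rightarrow> real list"

definition is_graph :: "nat \<Rightarrow> nat \<Rightarrow> graph \<Rightarrow> bool" where
  "is_graph n l G \<longleftrightarrow>
     edges G \<subseteq> {{u, v} | u v. u \<in> {1..n} \<and> v \<in> {1..n} \<and> u \<noteq> v} \<and>
     (\<forall>v\<in>{1..n}. length (col G v) = l) \<and>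
     (\<forall>v. v \<notin> {1..n} \<longrightarrow> col G v = [])"

text \<open>Index variables are x_i, represented by the natural number i.
Lab s x is P_s(x). Fn f args is f(phi_1,...,phi_p). Sum x phi is the sum over x.\<close>

datatype tl =
    EqI nat nat
  | NeqI nat nat
  | Edge nat nat
  | Lab nat nat
  | Mul tl tl
  | Add tl tl
  | Smul real tl
  | Fn "real list \<Rightarrow> real" "tl list"
  | Sum nat tl

fun free_vars :: "tl \<Rightarrow> nat set" where
  "free_vars (EqI x y) = {x, y}"
| "free_vars (NeqI x y) = {x, y}"
| "free_vars (Edge x y) = {x, y}"
| "free_vars (Lab s x) = {x}"
| "free_vars (Mul a b) = free_vars a \<union> free_vars b"
| "free_vars (Add a b) = free_vars a \<union> free_vars b"
| "free_vars (Smul c a) = free_vars a"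
| "free_vars (Fn f args) = (\<Union>a\<in>set args. free_vars a)"
| "free_vars (Sum x a) = free_vars a - {x}"

fun all_vars :: "tl \<Rightarrow> nat set" where
  "all_vars (EqI x y) = {x, y}"
| "all_vars (NeqI x y) = {x, y}"
| "all_vars (Edge x y) = {x, y}"
| "all_vars (Lab s x) = {x}"
| "all_vars (Mul a b) = all_vars a \<union> all_vars b"
| "all_vars (Add a b) = all_vars a \<union> all_vars b"
| "all_vars (Smul c a) = all_vars a"
| "all_vars (Fn f args) = (\<Union>a\<in>set args. all_vars a)"
| "all_vars (Sum x a) = insert x (all_vars a)"

fun sum_depth :: "tl \<Rightarrow> nat" where
  "sum_depth (EqI x y) = 0"
| "sum_depth (NeqI x y) = 0"
| "sum_depth (Edge x y) = 0"
| "sum_depth (Lab s x) = 0"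
| "sum_depth (Mul a b) = max (sum_depth a) (sum_depth b)"
| "sum_depth (Add a b) = max (sum_depth a) (sum_depth b)"
| "sum_depth (Smul c a) = sum_depth a"
| "sum_depth (Fn f args) = Max (insert 0 (sum_depth ` set args))"
| "sum_depth (Sum x a) = Suc (sum_depth a)"

text \<open>Well-formedness w.r.t. the label dimension l and the function collection Omega
(a set of pairs (p, f), f being a function R^p -> R, R^p = real lists of length p).\<close>
fun wf_tl :: "nat \<Rightarrow> (nat \<times> (real list \<Rightarrow> real)) set \<Rightarrow> tl \<Rightarrow> bool" where
  "wf_tl l \<Omega> (EqI x y) = True"
| "wf_tl l \<Omega> (NeqI x y) = True"
| "wf_tl l \<Omega> (Edge x y) = True"
| "wf_tl l \<Omega> (Lab s x) = (s \<in> {1..l})"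
| "wf_tl l \<Omega> (Mul a b) = (wf_tl l \<Omega> a \<and> wf_tl l \<Omega> b)"
| "wf_tl l \<Omega> (Add a b) = (wf_tl l \<Omega> a \<and> wf_tl l \<Omega> b)"
| "wf_tl l \<Omega> (Smul c a) = wf_tl l \<Omega> a"
| "wf_tl l \<Omega> (Fn f args) = ((length args, f) \<in> \<Omega> \<and> (\<forall>a\<in>set args. wf_tl l \<Omega> a))"
| "wf_tl l \<Omega> (Sum x a) = wf_tl l \<Omega> a"

fun sem :: "nat \<Rightarrow> graph \<Rightarrow> (nat \<Rightarrow> nat) \<Rightarrow> tl \<Rightarrow> real" where
  "sem n G \<nu> (EqI x y) = (if \<nu> x = \<nu> y then 1 else 0)"
| "sem n G \<nu> (NeqI x y) = (if \<nu> x \<noteq> \<nu> y then 1 else 0)"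
| "sem n G \<nu> (Edge x y) = (if {\<nu> x, \<nu> y} \<in> edges G then 1 else 0)"
| "sem n G \<nu> (Lab s x) = col G (\<nu> x) ! (s - 1)"
| "sem n G \<nu> (Mul a b) = sem n G \<nu> a * sem n G \<nu> b"
| "sem n G \<nu> (Add a b) = sem n G \<nu> a + sem n G \<nu> b"
| "sem n G \<nu> (Smul c a) = c * sem n G \<nu> a"
| "sem n G \<nu> (Fn f args) = f (map (sem n G \<nu>) args)"
| "sem n G \<nu> (Sum x a) = (\<Sum>v\<in>{1..n}. sem n G (\<nu>(x := v)) a)"

definition TL :: "nat \<Rightarrow> (nat \<times> (real list \<Rightarrow> real)) set \<Rightarrow> nat \<Rightarrow> nat \<Rightarrow> tl set" where
  "TL l \<Omega> k t = {\<phi>. wf_tl l \<Omega> \<phi> \<and> all_vars \<phi> \<subseteq> {1..k} \<and> sum_depth \<phi> \<le> t}"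

definition rho1_TL :: "nat \<Rightarrow> nat \<Rightarrow> tl set \<Rightarrow> ((graph \<times> nat) \<times> (graph \<times> nat)) set" where
  "rho1_TL n l L = {((G, v), (H, w)).
      is_graph n l G \<and> is_graph n l H \<and> v \<in> {1..n} \<and> w \<in> {1..n} \<and>
      (\<forall>\<phi>\<in>L. free_vars \<phi> \<subseteq> {1} \<longrightarrow>
          sem n G (\<lambda>_. v) \<phi> = sem n H (\<lambda>_. w) \<phi>)}"

definition atp :: "graph \<Rightarrow> nat list \<Rightarrow> (bool \<times> bool) list \<times> real list list" where
  "atp G vs = ([(vs ! i = vs ! j, {vs ! i, vs ! j} \<in> edges G). i \<leftarrow> [0..<length vs], j \<leftarrow> [Suc i..<length vs]],
               map (col G) vs)"

datatype wlcol =
    WLBase "(bool \<times> bool) list \<times> real list list"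
  | WLStep wlcol "(((bool \<times> bool) list \<times> real list list) \<times> wlcol list) multiset"

text \<open>wl n G t vs is wl_k^(t)(G, vs) with k = length vs.\<close>
fun wl :: "nat \<Rightarrow> graph \<Rightarrow> nat \<Rightarrow> nat list \<Rightarrow> wlcol" where
  "wl n G 0 vs = WLBase (atp G vs)"
| "wl n G (Suc t) vs =
     WLStep (wl n G t vs)
       (image_mset (\<lambda>u. (atp G (vs @ [u]), map (\<lambda>i. wl n G t (vs[i := u])) [0..<length vs]))
          (mset_set {1..n}))"

definition vwl :: "nat \<Rightarrow> nat \<Rightarrow> nat \<Rightarrow> graph \<Rightarrow> nat \<Rightarrow> wlcol" where
  "vwl n k t G v = wl n G t (replicate k v)"

definition rho1_vwl :: "nat \<Rightarrow> nat \<Rightarrow> nat \<Rightarrow> nat \<Rightarrow> ((graph \<times> nat) \<times> (graph \<times> nat)) set" where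
  "rho1_vwl n l k t = {((G, v), (H, w)).
      is_graph n l G \<and> is_graph n l H \<and> v \<in> {1..n} \<and> w \<in> {1..n} \<and>
      vwl n k t G v = vwl n k t H w}"

end

theory Submission
  imports Defs "HOL-Library.FuncSet"
begin

lemma ms_map:
  assumes "finite A" "finite B"
    and "image_mset f (mset_set A) = image_mset g (mset_set B)"
    and "\<And>a b. a \<in> A \<Longrightarrow> b \<in> B \<Longrightarrow> f a = g b \<Longrightarrow> f' a = g' b"
  shows "image_mset f' (mset_set A) = image_mset g' (mset_set B)"
  using assms
proof (induction A arbitrary: B rule: finite_induct)
  case empty
  then have "mset_set B = {#}" by simp
  then have "B = {}" using empty by (simp add: mset_set_empty_iff)
  then show ?case by simp
next
  case (insert a A)
  have "f a \<in># image_mset g (mset_set B)"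
    using insert(1,2,5) by (metis image_mset_add_mset mset_set.insert union_single_eq_member)
  then obtain b where b: "b \<in> B" "g b = f a" using insert(4) by auto
  have mB: "mset_set B = add_mset b (mset_set (B - {b}))"
    using b insert(4) by (simp add: mset_set.remove)
  have "image_mset f (mset_set A) = image_mset g (mset_set (B - {b}))"
    using insert(1,2,5) mB b by simp
  then have "image_mset f' (mset_set A) = image_mset g' (mset_set (B - {b}))"
    using insert by (intro insert.IH) auto
  moreover have "f' a = g' b" using insert(6)[of a b] b by auto
  ultimately show ?case using insert(1,2) mB by simp
qed

lemma ms_sum:
  assumes "finite A" "finite B"
    and "image_mset f (mset_set A) = image_mset g (mset_set B)"
    and "\<And>a b. a \<in> A \<Longrightarrow> b \<in> B \<Longrightarrow> f a = g b \<Longrightarrow> F a = G b"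
  shows "sum F A = (sum G B :: real)"
  using ms_map[OF assms] by (simp add: sum_unfold_sum_mset)

lemma atp_eq:
  assumes "length xs = length ys"
  shows "atp X xs = atp Y ys \<longleftrightarrow>
    (\<forall>i j. i < j \<and> j < length xs \<longrightarrow> (xs!i = xs!j \<longleftrightarrow> ys!i = ys!j) \<and>
         ({xs!i, xs!j} \<in> edges X \<longleftrightarrow> {ys!i, ys!j} \<in> edges Y)) \<and>
    (\<forall>i < length xs. col X (xs!i) = col Y (ys!i))"
proof -
  let ?L = "concat (map (\<lambda>i. map (\<lambda>j. (i,j)) [Suc i..<length xs]) [0..<length xs])"
  have e1: "[(xs ! i = xs ! j, {xs ! i, xs ! j} \<in> edges X). i \<leftarrow> [0..<length xs], j \<leftarrow> [Suc i..<length xs]]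
     = map (\<lambda>(i,j). (xs ! i = xs ! j, {xs ! i, xs ! j} \<in> edges X)) ?L"
    by (simp add: map_concat comp_def)
  have e2: "[(ys ! i = ys ! j, {ys ! i, ys ! j} \<in> edges Y). i \<leftarrow> [0..<length ys], j \<leftarrow> [Suc i..<length ys]]
     = map (\<lambda>(i,j). (ys ! i = ys ! j, {ys ! i, ys ! j} \<in> edges Y)) ?L"
    using assms by (simp add: map_concat comp_def)
  have sL: "set ?L = {(i,j). i < j \<and> j < length xs}" by (auto simp: image_iff)
  have "map (col X) xs = map (col Y) ys \<longleftrightarrow> (\<forall>i < length xs. col X (xs!i) = col Y (ys!i))"
    using assms by (simp add: list_eq_iff_nth_eq)
  moreover have "map (\<lambda>(i,j). (xs ! i = xs ! j, {xs ! i, xs ! j} \<in> edges X)) ?L =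
     map (\<lambda>(i,j). (ys ! i = ys ! j, {ys ! i, ys ! j} \<in> edges Y)) ?L \<longleftrightarrow>
    (\<forall>i j. i < j \<and> j < length xs \<longrightarrow> (xs!i = xs!j \<longleftrightarrow> ys!i = ys!j) \<and>
         ({xs!i, xs!j} \<in> edges X \<longleftrightarrow> {ys!i, ys!j} \<in> edges Y))"
    unfolding map_eq_conv sL by auto
  ultimately show ?thesis unfolding atp_def e1 e2 by simp
qed

definition Qset where
  "Qset X Y \<nu> \<mu> S \<longleftrightarrow> (\<forall>a\<in>S. \<forall>b\<in>S. a \<noteq> b \<longrightarrow> (\<nu> a = \<nu> b \<longleftrightarrow> \<mu> a = \<mu> b) \<and>
        ({\<nu> a, \<nu> b} \<in> edges X \<longleftrightarrow> {\<mu> a, \<mu> b} \<in> edges Y)) \<and> (\<forall>a\<in>S. col X (\<nu> a) = col Y (\<mu> a))"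

lemma atp_map_eq:
  assumes "distinct A"
  shows "atp X (map \<nu> A) = atp Y (map \<mu> A) \<longleftrightarrow> Qset X Y \<nu> \<mu> (set A)"
proof -
  have "atp X (map \<nu> A) = atp Y (map \<mu> A) \<longleftrightarrow>
    (\<forall>i j. i < j \<and> j < length A \<longrightarrow> (\<nu> (A!i) = \<nu> (A!j) \<longleftrightarrow> \<mu> (A!i) = \<mu> (A!j)) \<and>
         ({\<nu> (A!i), \<nu> (A!j)} \<in> edges X \<longleftrightarrow> {\<mu> (A!i), \<mu> (A!j)} \<in> edges Y)) \<and>
    (\<forall>i < length A. col X (\<nu> (A!i)) = col Y (\<mu> (A!i)))"
    by (subst atp_eq) auto
  also have "\<dots> \<longleftrightarrow> Qset X Y \<nu> \<mu> (set A)"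
  proof
    assume H: "(\<forall>i j. i < j \<and> j < length A \<longrightarrow> (\<nu> (A!i) = \<nu> (A!j) \<longleftrightarrow> \<mu> (A!i) = \<mu> (A!j)) \<and>
         ({\<nu> (A!i), \<nu> (A!j)} \<in> edges X \<longleftrightarrow> {\<mu> (A!i), \<mu> (A!j)} \<in> edges Y)) \<and>
    (\<forall>i < length A. col X (\<nu> (A!i)) = col Y (\<mu> (A!i)))"
    have P1: "\<forall>a\<in>set A. \<forall>b\<in>set A. a \<noteq> b \<longrightarrow> (\<nu> a = \<nu> b \<longleftrightarrow> \<mu> a = \<mu> b) \<and> ({\<nu> a, \<nu> b} \<in> edges X \<longleftrightarrow> {\<mu> a, \<mu> b} \<in> edges Y)"
    proof (intro ballI impI)
      fix a b assume ab: "a \<in> set A" "b \<in> set A" "a \<noteq> b"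
      then obtain i j where ij: "i < length A" "j < length A" "A!i = a" "A!j = b"
        by (auto simp: in_set_conv_nth)
      with ab have "i \<noteq> j" by auto
      then consider "i < j" | "j < i" by linarith
      then show "(\<nu> a = \<nu> b \<longleftrightarrow> \<mu> a = \<mu> b) \<and> ({\<nu> a, \<nu> b} \<in> edges X \<longleftrightarrow> {\<mu> a, \<mu> b} \<in> edges Y)"
      proof cases
        case 1 then show ?thesis using H ij by auto
      next
        case 2 then have "(\<nu> b = \<nu> a \<longleftrightarrow> \<mu> b = \<mu> a) \<and> ({\<nu> b, \<nu> a} \<in> edges X \<longleftrightarrow> {\<mu> b, \<mu> a} \<in> edges Y)"
          using H ij by auto
        then show ?thesis by (auto simp: insert_commute)
      qed
    qed
    have P2: "\<forall>a\<in>set A. col X (\<nu> a) = col Y (\<mu> a)" using H by (auto simp: in_set_conv_nth)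
    show "Qset X Y \<nu> \<mu> (set A)" unfolding Qset_def using P1 P2 by blast
  next
    assume Q: "Qset X Y \<nu> \<mu> (set A)"
    show "(\<forall>i j. i < j \<and> j < length A \<longrightarrow> (\<nu> (A!i) = \<nu> (A!j) \<longleftrightarrow> \<mu> (A!i) = \<mu> (A!j)) \<and>
         ({\<nu> (A!i), \<nu> (A!j)} \<in> edges X \<longleftrightarrow> {\<mu> (A!i), \<mu> (A!j)} \<in> edges Y)) \<and>
    (\<forall>i < length A. col X (\<nu> (A!i)) = col Y (\<mu> (A!i)))"
    proof (intro conjI)
      show "\<forall>i j. i < j \<and> j < length A \<longrightarrow> (\<nu> (A!i) = \<nu> (A!j) \<longleftrightarrow> \<mu> (A!i) = \<mu> (A!j)) \<and>
         ({\<nu> (A!i), \<nu> (A!j)} \<in> edges X \<longleftrightarrow> {\<mu> (A!i), \<mu> (A!j)} \<in> edges Y)"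
      proof (intro allI impI)
        fix i j assume ij: "i < j \<and> j < length A"
        then have "A!i \<noteq> A!j" using assms by (simp add: nth_eq_iff_index_eq)
        then show "(\<nu> (A!i) = \<nu> (A!j) \<longleftrightarrow> \<mu> (A!i) = \<mu> (A!j)) \<and>
           ({\<nu> (A!i), \<nu> (A!j)} \<in> edges X \<longleftrightarrow> {\<mu> (A!i), \<mu> (A!j)} \<in> edges Y)"
          using Q ij unfolding Qset_def by (meson nth_mem order.strict_trans)
      qed
      show "\<forall>i < length A. col X (\<nu> (A!i)) = col Y (\<mu> (A!i))" using Q unfolding Qset_def by auto
    qed
  qed
  finally show ?thesis .
qed

lemma wl_Suc_eq:
  "wl n X (Suc t) xs = wl n Y (Suc t) ys \<longleftrightarrow>
    wl n X t xs = wl n Y t ys \<and>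
    image_mset (\<lambda>u. (atp X (xs @ [u]), map (\<lambda>i. wl n X t (xs[i := u])) [0..<length xs])) (mset_set {1..n})
    = image_mset (\<lambda>u. (atp Y (ys @ [u]), map (\<lambda>i. wl n Y t (ys[i := u])) [0..<length ys])) (mset_set {1..n})"
  by simp

lemma wl_perm:
  fixes A B :: "nat list"
  shows "distinct A \<Longrightarrow> distinct B \<Longrightarrow> set A = set B \<Longrightarrow>
   wl n X t (map \<nu> A) = wl n Y t (map \<mu> A) \<Longrightarrow> wl n X t (map \<nu> B) = wl n Y t (map \<mu> B)"
proof (induction t arbitrary: A B \<nu> \<mu>)
  case 0
  then show ?case using atp_map_eq[of A X \<nu> Y \<mu>] atp_map_eq[of B X \<nu> Y \<mu>] by simp
next
  case (Suc t)
  obtain z :: nat where z: "z \<notin> set A" using ex_new_if_finite[of "set A"] by auto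
  have zB: "z \<notin> set B" using z Suc.prems by simp
  have lenAB: "length A = length B" using Suc.prems by (metis distinct_card)
  define fX where "fX = (\<lambda>(C::nat list) \<nu>. \<lambda>u. (atp X (map \<nu> C @ [u]), map (\<lambda>i. wl n X t ((map \<nu> C)[i := u])) [0..<length (map \<nu> C)]))"
  define fY where "fY = (\<lambda>(C::nat list) \<mu>. \<lambda>u. (atp Y (map \<mu> C @ [u]), map (\<lambda>i. wl n Y t ((map \<mu> C)[i := u])) [0..<length (map \<mu> C)]))"
  have h1: "wl n X t (map \<nu> A) = wl n Y t (map \<mu> A)"
    and h2: "image_mset (fX A \<nu>) (mset_set {1..n}) = image_mset (fY A \<mu>) (mset_set {1..n})"
    using Suc.prems(4) unfolding wl_Suc_eq fX_def fY_def by blast+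
  have "wl n X t (map \<nu> B) = wl n Y t (map \<mu> B)"
    using Suc.IH[OF Suc.prems(1-3) h1] .
  moreover have "image_mset (fX B \<nu>) (mset_set {1..n}) = image_mset (fY B \<mu>) (mset_set {1..n})"
  proof (rule ms_map[OF _ _ h2])
    fix u u' assume eq: "fX A \<nu> u = fY A \<mu> u'"
    define \<nu>' where "\<nu>' = \<nu>(z := u)"
    define \<mu>' where "\<mu>' = \<mu>(z := u')"
    have mA: "map \<nu> A = map \<nu>' A" "map \<mu> A = map \<mu>' A"
      using z unfolding \<nu>'_def \<mu>'_def by (auto intro!: map_cong)
    have mB: "map \<nu> B = map \<nu>' B" "map \<mu> B = map \<mu>' B"
      using zB unfolding \<nu>'_def \<mu>'_def by (auto intro!: map_cong)
    have appA: "map \<nu> A @ [u] = map \<nu>' (A @ [z])" "map \<mu> A @ [u'] = map \<mu>' (A @ [z])"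
      using mA by (simp_all add: \<nu>'_def \<mu>'_def)
    have appB: "map \<nu> B @ [u] = map \<nu>' (B @ [z])" "map \<mu> B @ [u'] = map \<mu>' (B @ [z])"
      using mB by (simp_all add: \<nu>'_def \<mu>'_def)
    have updA: "(map \<nu> A)[i := u] = map \<nu>' (A[i:=z])" "(map \<mu> A)[i := u'] = map \<mu>' (A[i:=z])" for i
      by (subst mA(1), simp add: map_update \<nu>'_def) (subst mA(2), simp add: map_update \<mu>'_def)
    have updB: "(map \<nu> B)[i := u] = map \<nu>' (B[i:=z])" "(map \<mu> B)[i := u'] = map \<mu>' (B[i:=z])" for i
      by (subst mB(1), simp add: map_update \<nu>'_def) (subst mB(2), simp add: map_update \<mu>'_def)
    have e1: "atp X (map \<nu>' (A @ [z])) = atp Y (map \<mu>' (A @ [z]))"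
      using eq unfolding fX_def fY_def appA by simp
    have e2: "wl n X t (map \<nu>' (A[i:=z])) = wl n Y t (map \<mu>' (A[i:=z]))" if "i < length A" for i
    proof -
      have "map (\<lambda>i. wl n X t ((map \<nu> A)[i := u])) [0..<length A] = map (\<lambda>i. wl n Y t ((map \<mu> A)[i := u'])) [0..<length A]"
        using eq unfolding fX_def fY_def by simp
      then have "wl n X t ((map \<nu> A)[i := u]) = wl n Y t ((map \<mu> A)[i := u'])"
        using that by (simp add: map_eq_conv)
      then show ?thesis unfolding updA .
    qed
    have dAz: "distinct (A @ [z])" using Suc.prems z by simp
    have dBz: "distinct (B @ [z])" using Suc.prems zB by simp
    have sABz: "set (A @ [z]) = set (B @ [z])" using Suc.prems by simp
    have s1: "atp X (map \<nu>' (B @ [z])) = atp Y (map \<mu>' (B @ [z]))"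
      using e1 atp_map_eq[OF dAz, of X \<nu>' Y \<mu>'] atp_map_eq[OF dBz, of X \<nu>' Y \<mu>'] sABz by metis
    have s2: "wl n X t (map \<nu>' (B[i:=z])) = wl n Y t (map \<mu>' (B[i:=z]))" if i: "i < length B" for i
    proof -
      have "B!i \<in> set A" using i Suc.prems by auto
      then obtain i' where i': "i' < length A" "A!i' = B!i" by (auto simp: in_set_conv_nth)
      have dA: "distinct (A[i':=z])" using Suc.prems z by (simp add: distinct_list_update)
      have dB: "distinct (B[i:=z])" using Suc.prems zB by (simp add: distinct_list_update)
      have "set (A[i':=z]) = set (B[i:=z])"
        using Suc.prems i i' by (simp add: set_update_distinct)
      then show ?thesis using Suc.IH[OF dA dB] e2 i' by blast
    qed
    have "map (\<lambda>i. wl n X t ((map \<nu> B)[i := u])) [0..<length B] = map (\<lambda>i. wl n Y t ((map \<mu> B)[i := u'])) [0..<length B]"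
      unfolding map_eq_conv updB using s2 by simp
    then show "fX B \<nu> u = fY B \<mu> u'"
      unfolding fX_def fY_def appB using s1 by simp
  qed simp_all
  ultimately show ?case unfolding wl_Suc_eq fX_def fY_def by simp
qed

definition Dl :: "nat \<Rightarrow> nat \<Rightarrow> nat list" where
  "Dl K j = filter (\<lambda>x. x \<noteq> j) [1..<Suc K]"

lemma Dl_distinct: "distinct (Dl K j)" by (simp add: Dl_def)
lemma Dl_set: "set (Dl K j) = {1..K} - {j}" by (auto simp: Dl_def)
lemma Dl_length: "j \<in> {1..K} \<Longrightarrow> length (Dl K j) = K - 1"
proof -
  assume "j \<in> {1..K}"
  then have "card ({1..K} - {j}) = K - 1" by simp
  then show ?thesis using distinct_card[OF Dl_distinct[of K j]] Dl_set[of K j] by simp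
qed

definition EQ where
  "EQ n X Y K t \<nu> \<mu> \<longleftrightarrow> atp X (map \<nu> [1..<Suc K]) = atp Y (map \<mu> [1..<Suc K]) \<and>
     (\<forall>j\<in>{1..K}. wl n X t (map \<nu> (Dl K j)) = wl n Y t (map \<mu> (Dl K j)))"

lemma no_loop: "is_graph n l X \<Longrightarrow> {a, a} \<notin> edges X"
  unfolding is_graph_def by (auto simp: doubleton_eq_iff)

lemma EQ_Qset: "EQ n X Y K t \<nu> \<mu> \<Longrightarrow> Qset X Y \<nu> \<mu> {1..K}"
proof -
  assume "EQ n X Y K t \<nu> \<mu>"
  moreover have "distinct [1..<Suc K]" by simp
  moreover have "set [1..<Suc K] = {1..K}" by auto
  ultimately show ?thesis unfolding EQ_def using atp_map_eq[of "[1..<Suc K]" X \<nu> Y \<mu>] by metis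
qed

lemma sd_Fn: "a \<in> set args \<Longrightarrow> sum_depth a \<le> sum_depth (Fn f args)"
  by simp

lemma main_A:
  assumes gX: "is_graph n l X" and gY: "is_graph n l Y"
  shows "all_vars \<phi> \<subseteq> {1..K} \<Longrightarrow> sum_depth \<phi> \<le> t \<Longrightarrow> EQ n X Y K t \<nu> \<mu> \<Longrightarrow>
         sem n X \<nu> \<phi> = sem n Y \<mu> \<phi>"
proof (induction \<phi> arbitrary: t \<nu> \<mu>)
  case (EqI x y)
  have Q: "Qset X Y \<nu> \<mu> {1..K}" using EqI.prems(3) by (rule EQ_Qset)
  show ?case using Q EqI.prems(1) unfolding Qset_def by (cases "x = y") auto
next
  case (NeqI x y)
  have Q: "Qset X Y \<nu> \<mu> {1..K}" using NeqI.prems(3) by (rule EQ_Qset)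
  show ?case using Q NeqI.prems(1) unfolding Qset_def by (cases "x = y") auto
next
  case (Edge x y)
  have Q: "Qset X Y \<nu> \<mu> {1..K}" using Edge.prems(3) by (rule EQ_Qset)
  show ?case
  proof (cases "x = y")
    case True then show ?thesis using no_loop[OF gX] no_loop[OF gY] by simp
  next
    case False then show ?thesis using Q Edge.prems(1) unfolding Qset_def by auto
  qed
next
  case (Lab s x)
  have Q: "Qset X Y \<nu> \<mu> {1..K}" using Lab.prems(3) by (rule EQ_Qset)
  show ?case using Q Lab.prems(1) unfolding Qset_def by auto
next
  case (Mul a b) then show ?case by auto
next
  case (Add a b) then show ?case by auto
next
  case (Smul c a) then show ?case by auto
next
  case (Fn f args)
  have "map (sem n X \<nu>) args = map (sem n Y \<mu>) args"
  proof (rule map_cong[OF refl])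
    fix a assume a: "a \<in> set args"
    show "sem n X \<nu> a = sem n Y \<mu> a"
      using Fn.IH[OF a _ _ Fn.prems(3)] Fn.prems(1,2) sd_Fn[OF a, of f] a by auto
  qed
  then show ?case by (simp only: sem.simps)
next
  case (Sum x \<phi>)
  obtain t' where t: "t = Suc t'" and sd: "sum_depth \<phi> \<le> t'" using Sum.prems(2) by (cases t) auto
  have x: "x \<in> {1..K}" and av: "all_vars \<phi> \<subseteq> {1..K}" using Sum.prems(1) by auto
  let ?D = "Dl K x"
  have "wl n X (Suc t') (map \<nu> ?D) = wl n Y (Suc t') (map \<mu> ?D)"
    using Sum.prems(3) x t unfolding EQ_def by blast
  then have w0: "wl n X t' (map \<nu> ?D) = wl n Y t' (map \<mu> ?D)"
    and ms: "image_mset (\<lambda>u. (atp X (map \<nu> ?D @ [u]), map (\<lambda>i. wl n X t' ((map \<nu> ?D)[i := u])) [0..<length (map \<nu> ?D)])) (mset_set {1..n})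
    = image_mset (\<lambda>u. (atp Y (map \<mu> ?D @ [u]), map (\<lambda>i. wl n Y t' ((map \<mu> ?D)[i := u])) [0..<length (map \<mu> ?D)])) (mset_set {1..n})"
    unfolding wl_Suc_eq by blast+
  have "(\<Sum>u\<in>{1..n}. sem n X (\<nu>(x := u)) \<phi>) = (\<Sum>u\<in>{1..n}. sem n Y (\<mu>(x := u)) \<phi>)"
  proof (rule ms_sum[OF _ _ ms])
    fix u u' assume eq: "(atp X (map \<nu> ?D @ [u]), map (\<lambda>i. wl n X t' ((map \<nu> ?D)[i := u])) [0..<length (map \<nu> ?D)])
      = (atp Y (map \<mu> ?D @ [u']), map (\<lambda>i. wl n Y t' ((map \<mu> ?D)[i := u'])) [0..<length (map \<mu> ?D)])"
    define \<nu>' where "\<nu>' = \<nu>(x := u)"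
    define \<mu>' where "\<mu>' = \<mu>(x := u')"
    have xD: "x \<notin> set ?D" by (simp add: Dl_set)
    have mD: "map \<nu> ?D = map \<nu>' ?D" "map \<mu> ?D = map \<mu>' ?D"
      using xD unfolding \<nu>'_def \<mu>'_def by (auto intro!: map_cong)
    have app: "map \<nu> ?D @ [u] = map \<nu>' (?D @ [x])" "map \<mu> ?D @ [u'] = map \<mu>' (?D @ [x])"
      using mD by (simp_all add: \<nu>'_def \<mu>'_def)
    have upd: "(map \<nu> ?D)[i := u] = map \<nu>' (?D[i:=x])" "(map \<mu> ?D)[i := u'] = map \<mu>' (?D[i:=x])" for i
      by (subst mD(1), simp add: map_update \<nu>'_def) (subst mD(2), simp add: map_update \<mu>'_def)
    have dDx: "distinct (?D @ [x])" using xD Dl_distinct by simp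
    have sDx: "set (?D @ [x]) = {1..K}" using x by (auto simp: Dl_set)
    have "atp X (map \<nu>' (?D @ [x])) = atp Y (map \<mu>' (?D @ [x]))"
      using eq unfolding app by simp
    then have "Qset X Y \<nu>' \<mu>' {1..K}" using atp_map_eq[OF dDx] sDx by metis
    then have E1: "atp X (map \<nu>' [1..<Suc K]) = atp Y (map \<mu>' [1..<Suc K])"
    proof -
      have "set [1..<Suc K] = {1..K}" by auto
      moreover have "distinct [1..<Suc K]" by simp
      ultimately show ?thesis using \<open>Qset X Y \<nu>' \<mu>' {1..K}\<close> atp_map_eq[of "[1..<Suc K]" X \<nu>' Y \<mu>'] by metis
    qed
    have E2: "wl n X t' (map \<nu>' (Dl K j)) = wl n Y t' (map \<mu>' (Dl K j))" if j: "j \<in> {1..K}" for j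
    proof (cases "j = x")
      case True then show ?thesis using w0 mD by simp
    next
      case False
      then have "j \<in> set ?D" using j by (simp add: Dl_set)
      then obtain i where i: "i < length ?D" "?D ! i = j" by (auto simp: in_set_conv_nth)
      have "map (\<lambda>i. wl n X t' ((map \<nu> ?D)[i := u])) [0..<length ?D] = map (\<lambda>i. wl n Y t' ((map \<mu> ?D)[i := u'])) [0..<length ?D]"
        using eq by simp
      then have "wl n X t' ((map \<nu> ?D)[i := u]) = wl n Y t' ((map \<mu> ?D)[i := u'])"
        using i by (simp add: map_eq_conv)
      then have h: "wl n X t' (map \<nu>' (?D[i:=x])) = wl n Y t' (map \<mu>' (?D[i:=x]))" unfolding upd .
      have dA: "distinct (?D[i:=x])" using xD Dl_distinct by (simp add: distinct_list_update)
      have "set (?D[i:=x]) = set (Dl K j)"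
        using i x j False by (auto simp: set_update_distinct[OF Dl_distinct] Dl_set)
      then show ?thesis using wl_perm[OF dA Dl_distinct] h by blast
    qed
    have "EQ n X Y K t' \<nu>' \<mu>'" unfolding EQ_def using E1 E2 by blast
    then show "sem n X (\<nu>(x := u)) \<phi> = sem n Y (\<mu>(x := u')) \<phi>"
      using Sum.IH[OF av sd] unfolding \<nu>'_def \<mu>'_def by blast
  qed simp_all
  then show ?case by simp
qed

lemma free_sub_all: "free_vars \<phi> \<subseteq> all_vars \<phi>"
  by (induction \<phi>) auto

lemma sem_cong: "\<forall>x\<in>free_vars \<phi>. \<nu> x = \<mu> x \<Longrightarrow> sem n X \<nu> \<phi> = sem n X \<mu> \<phi>"
proof (induction \<phi> arbitrary: \<nu> \<mu>)
  case (EqI x y) then show ?case by simp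
next
  case (NeqI x y) then show ?case by simp
next
  case (Edge x y) then show ?case by simp
next
  case (Lab s x) then show ?case by simp
next
  case (Mul a b)
  have "sem n X \<nu> a = sem n X \<mu> a" by (rule Mul.IH(1)) (use Mul.prems in auto)
  moreover have "sem n X \<nu> b = sem n X \<mu> b" by (rule Mul.IH(2)) (use Mul.prems in auto)
  ultimately show ?case by simp
next
  case (Add a b)
  have "sem n X \<nu> a = sem n X \<mu> a" by (rule Add.IH(1)) (use Add.prems in auto)
  moreover have "sem n X \<nu> b = sem n X \<mu> b" by (rule Add.IH(2)) (use Add.prems in auto)
  ultimately show ?case by simp
next
  case (Smul c a) then show ?case by simp
next
  case (Fn f args)
  have "map (sem n X \<nu>) args = map (sem n X \<mu>) args"
    by (rule map_cong[OF refl], rule Fn.IH) (use Fn.prems in auto)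
  then show ?case by (simp only: sem.simps)
next
  case (Sum x \<phi>)
  have "sem n X (\<nu>(x:=u)) \<phi> = sem n X (\<mu>(x:=u)) \<phi>" for u
    by (rule Sum.IH) (use Sum.prems in auto)
  then show ?case by simp
qed

definition one :: tl where "one = EqI 1 1"
definition zero :: tl where "zero = Smul 0 one"
lemma sem_one[simp]: "sem n X \<nu> one = 1" by (simp add: one_def)
lemma sem_zero[simp]: "sem n X \<nu> zero = 0" by (simp add: zero_def)

definition okF where
  "okF l \<Omega> K S t \<phi> \<longleftrightarrow> wf_tl l \<Omega> \<phi> \<and> all_vars \<phi> \<subseteq> {1..K} \<and> free_vars \<phi> \<subseteq> insert 1 S \<and> sum_depth \<phi> \<le> t"

lemma okF_one: "1 \<le> K \<Longrightarrow> okF l \<Omega> K S t one" by (simp add: okF_def one_def)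
lemma okF_zero: "1 \<le> K \<Longrightarrow> okF l \<Omega> K S t zero" by (simp add: okF_def one_def zero_def)
lemma okF_Mul: "okF l \<Omega> K S t a \<Longrightarrow> okF l \<Omega> K S t b \<Longrightarrow> okF l \<Omega> K S t (Mul a b)"
  by (auto simp: okF_def)
lemma okF_Add: "okF l \<Omega> K S t a \<Longrightarrow> okF l \<Omega> K S t b \<Longrightarrow> okF l \<Omega> K S t (Add a b)"
  by (auto simp: okF_def)
lemma okF_Smul: "okF l \<Omega> K S t a \<Longrightarrow> okF l \<Omega> K S t (Smul c a)"
  by (auto simp: okF_def)
lemma okF_mono: "okF l \<Omega> K S t a \<Longrightarrow> S \<subseteq> S' \<Longrightarrow> t \<le> t' \<Longrightarrow> okF l \<Omega> K S' t' a"
  by (auto simp: okF_def)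
lemma okF_Sum: "okF l \<Omega> K (insert z S) t a \<Longrightarrow> z \<in> {1..K} \<Longrightarrow> okF l \<Omega> K S (Suc t) (Sum z a)"
  by (auto simp: okF_def)

definition prodL :: "tl list \<Rightarrow> tl" where "prodL xs = foldr Mul xs one"
lemma sem_prodL: "sem n X \<nu> (prodL xs) = prod_list (map (sem n X \<nu>) xs)"
  by (induction xs) (auto simp: prodL_def)
lemma okF_prodL: "1 \<le> K \<Longrightarrow> (\<And>a. a \<in> set xs \<Longrightarrow> okF l \<Omega> K S t a) \<Longrightarrow> okF l \<Omega> K S t (prodL xs)"
  by (induction xs) (auto simp: prodL_def okF_one okF_Mul)

lemma prod_list_ind: "prod_list (map (\<lambda>x. if P x then 1 else 0) xs) = (if \<forall>x\<in>set xs. P x then 1 else (0::real))"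
  by (induction xs) auto

lemma prod_list_ones: "prod_list (map (\<lambda>b. 1::real) xs) = 1"
  by (induction xs) auto

definition indF :: "real list \<Rightarrow> real \<Rightarrow> tl \<Rightarrow> tl" where
  "indF bs a \<psi> = prodL (map (\<lambda>b. Smul (1/(a-b)) (Add \<psi> (Smul (-b) one))) (filter (\<lambda>b. b \<noteq> a) bs))"

lemma sem_indF:
  assumes "sem n X \<nu> \<psi> \<in> set bs"
  shows "sem n X \<nu> (indF bs a \<psi>) = (if sem n X \<nu> \<psi> = a then 1 else 0)"
proof -
  have e: "sem n X \<nu> (indF bs a \<psi>) = prod_list (map (\<lambda>b. (1/(a-b)) * (sem n X \<nu> \<psi> - b)) (filter (\<lambda>b. b \<noteq> a) bs))"
    by (simp add: indF_def sem_prodL comp_def)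
  show ?thesis
  proof (cases "sem n X \<nu> \<psi> = a")
    case True
    have "prod_list (map (\<lambda>b. (1/(a-b)) * (sem n X \<nu> \<psi> - b)) (filter (\<lambda>b. b \<noteq> a) bs)) = prod_list (map (\<lambda>b. 1) (filter (\<lambda>b. b \<noteq> a) bs))"
      by (rule arg_cong[where f=prod_list], rule map_cong) (auto simp: True)
    then show ?thesis using e True prod_list_ones by simp
  next
    case False
    then have "0 \<in> set (map (\<lambda>b. (1/(a-b)) * (sem n X \<nu> \<psi> - b)) (filter (\<lambda>b. b \<noteq> a) bs))"
      using assms by (auto intro!: image_eqI[where x="sem n X \<nu> \<psi>"])
    then show ?thesis using e False by (simp add: prod_list_zero_iff)
  qed
qed

lemma okF_indF: "1 \<le> K \<Longrightarrow> okF l \<Omega> K S t \<psi> \<Longrightarrow> okF l \<Omega> K S t (indF bs a \<psi>)"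
  unfolding indF_def by (rule okF_prodL) (auto intro!: okF_Smul okF_Add okF_one)

definition VV :: "nat \<Rightarrow> nat \<Rightarrow> (nat \<Rightarrow> nat) set" where
  "VV K n = {\<nu>. \<forall>x\<in>{1..K}. \<nu> x \<in> {1..n}}"

lemma VV_upd: "\<nu> \<in> VV K n \<Longrightarrow> u \<in> {1..n} \<Longrightarrow> \<nu>(z := u) \<in> VV K n"
  by (auto simp: VV_def)

lemma finite_vals:
  assumes "all_vars \<psi> \<subseteq> {1..K}" "finite GS"
  shows "finite {sem n X \<nu> \<psi> | X \<nu>. X \<in> GS \<and> \<nu> \<in> VV K n}"
proof -
  let ?ext = "\<lambda>\<rho> x. if x \<in> {1..K} then \<rho> x else (0::nat)"
  have "{sem n X \<nu> \<psi> | X \<nu>. X \<in> GS \<and> \<nu> \<in> VV K n} \<subseteq>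
        (\<lambda>(X,\<rho>). sem n X (?ext \<rho>) \<psi>) ` (GS \<times> (PiE {1..K} (\<lambda>_. {1..n})))"
  proof
    fix r assume "r \<in> {sem n X \<nu> \<psi> | X \<nu>. X \<in> GS \<and> \<nu> \<in> VV K n}"
    then obtain X \<nu> where r: "r = sem n X \<nu> \<psi>" "X \<in> GS" "\<nu> \<in> VV K n" by blast
    have "sem n X \<nu> \<psi> = sem n X (?ext (restrict \<nu> {1..K})) \<psi>"
      by (rule sem_cong) (use assms(1) free_sub_all in force)
    moreover have "restrict \<nu> {1..K} \<in> PiE {1..K} (\<lambda>_. {1..n})" using r(3) by (auto simp: VV_def)
    ultimately show "r \<in> (\<lambda>(X,\<rho>). sem n X (?ext \<rho>) \<psi>) ` (GS \<times> (PiE {1..K} (\<lambda>_. {1..n})))"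
      using r by (auto intro!: image_eqI[where x="(X, restrict \<nu> {1..K})"])
  qed
  moreover have "finite (GS \<times> (PiE {1..K} (\<lambda>_. {1..n})))"
    using assms(2) by (auto intro!: finite_PiE)
  ultimately show ?thesis by (meson finite_imageI finite_subset)
qed

lemma ex_ind:
  assumes "1 \<le> K" "okF l \<Omega> K S t \<psi>" "finite GS"
  shows "\<exists>\<phi>. okF l \<Omega> K S t \<phi> \<and> (\<forall>X\<in>GS. \<forall>\<nu>\<in>VV K n. sem n X \<nu> \<phi> = (if sem n X \<nu> \<psi> = a then 1 else 0))"
proof -
  let ?F = "{sem n X \<nu> \<psi> | X \<nu>. X \<in> GS \<and> \<nu> \<in> VV K n}"
  have fin: "finite ?F" using finite_vals assms unfolding okF_def by blast
  obtain bs where bs: "set bs = ?F" using finite_list[OF fin] by blast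
  show ?thesis
  proof (intro exI conjI ballI)
    show "okF l \<Omega> K S t (indF bs a \<psi>)" using okF_indF assms by blast
  next
    fix X \<nu> assume "X \<in> GS" "\<nu> \<in> VV K n"
    then have "sem n X \<nu> \<psi> \<in> set bs" using bs by blast
    then show "sem n X \<nu> (indF bs a \<psi>) = (if sem n X \<nu> \<psi> = a then 1 else 0)" by (rule sem_indF)
  qed
qed

definition atoms :: "nat list \<Rightarrow> nat \<Rightarrow> tl list" where
  "atoms \<tau> l = [EqI x y. x \<leftarrow> \<tau>, y \<leftarrow> \<tau>] @ [Edge x y. x \<leftarrow> \<tau>, y \<leftarrow> \<tau>] @ [Lab s x. x \<leftarrow> \<tau>, s \<leftarrow> [1..<Suc l]]"

lemma col_len: "is_graph n l X \<Longrightarrow> v \<in> {1..n} \<Longrightarrow> length (col X v) = l"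
  unfolding is_graph_def by auto

lemma atoms_iff:
  "(\<forall>\<psi>\<in>set (atoms \<tau> l). sem n X \<nu> \<psi> = sem n Y \<mu> \<psi>) \<longleftrightarrow>
   (\<forall>x\<in>set \<tau>. \<forall>y\<in>set \<tau>. (\<nu> x = \<nu> y \<longleftrightarrow> \<mu> x = \<mu> y) \<and> ({\<nu> x, \<nu> y} \<in> edges X \<longleftrightarrow> {\<mu> x, \<mu> y} \<in> edges Y)) \<and>
   (\<forall>x\<in>set \<tau>. \<forall>s\<in>{1..l}. col X (\<nu> x) ! (s-1) = col Y (\<mu> x) ! (s-1))"
proof -
  have e: "(\<forall>\<psi>\<in>set (atoms \<tau> l). P \<psi>) \<longleftrightarrow> (\<forall>x\<in>set \<tau>. \<forall>y\<in>set \<tau>. P (EqI x y)) \<and> (\<forall>x\<in>set \<tau>. \<forall>y\<in>set \<tau>. P (Edge x y))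
     \<and> (\<forall>x\<in>set \<tau>. \<forall>s\<in>{1..l}. P (Lab s x))" for P
  proof -
    have sa: "set (atoms \<tau> l) = {EqI x y|x y. x\<in>set \<tau> \<and> y \<in> set \<tau>} \<union> {Edge x y|x y. x\<in>set \<tau> \<and> y \<in> set \<tau>}
       \<union> {Lab s x|s x. x\<in>set \<tau> \<and> s \<in> {1..<Suc l}}"
      unfolding atoms_def by (auto simp: image_iff less_Suc_eq)
    have "{1..<Suc l} = {1..l}" by auto
    then show ?thesis unfolding sa by blast
  qed
  have e1: "(sem n X \<nu> (EqI x y) = sem n Y \<mu> (EqI x y)) \<longleftrightarrow> (\<nu> x = \<nu> y \<longleftrightarrow> \<mu> x = \<mu> y)" for x y
    by simp
  have e2: "(sem n X \<nu> (Edge x y) = sem n Y \<mu> (Edge x y)) \<longleftrightarrow> ({\<nu> x, \<nu> y} \<in> edges X \<longleftrightarrow> {\<mu> x, \<mu> y} \<in> edges Y)" for x y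
    by simp
  show ?thesis unfolding e e1 e2 by auto
qed

lemma ATP0:
  assumes gX: "is_graph n l X" and gY: "is_graph n l Y"
    and v: "\<forall>x\<in>set \<tau>. \<nu> x \<in> {1..n}" "\<forall>x\<in>set \<tau>. \<mu> x \<in> {1..n}"
  shows "atp X (map \<nu> \<tau>) = atp Y (map \<mu> \<tau>) \<longleftrightarrow> (\<forall>\<psi>\<in>set (atoms \<tau> l). sem n X \<nu> \<psi> = sem n Y \<mu> \<psi>)"
proof -
  have colq: "col X (\<nu> x) = col Y (\<mu> x) \<longleftrightarrow> (\<forall>s\<in>{1..l}. col X (\<nu> x) ! (s-1) = col Y (\<mu> x) ! (s-1))"
    if x: "x \<in> set \<tau>" for x
  proof -
    have l1: "length (col X (\<nu> x)) = l" "length (col Y (\<mu> x)) = l"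
      using col_len[OF gX] col_len[OF gY] v x by auto
    show ?thesis
    proof
      assume "\<forall>s\<in>{1..l}. col X (\<nu> x) ! (s-1) = col Y (\<mu> x) ! (s-1)"
      then have "\<forall>i<l. col X (\<nu> x) ! i = col Y (\<mu> x) ! i"
        by (metis Suc_leI atLeastAtMost_iff diff_Suc_1 le_add1 plus_1_eq_Suc)
      then show "col X (\<nu> x) = col Y (\<mu> x)" using l1 by (simp add: list_eq_iff_nth_eq)
    qed simp
  qed
  have "atp X (map \<nu> \<tau>) = atp Y (map \<mu> \<tau>) \<longleftrightarrow>
    (\<forall>i j. i < j \<and> j < length \<tau> \<longrightarrow> (\<nu> (\<tau>!i) = \<nu> (\<tau>!j) \<longleftrightarrow> \<mu> (\<tau>!i) = \<mu> (\<tau>!j)) \<and>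
         ({\<nu> (\<tau>!i), \<nu> (\<tau>!j)} \<in> edges X \<longleftrightarrow> {\<mu> (\<tau>!i), \<mu> (\<tau>!j)} \<in> edges Y)) \<and>
    (\<forall>i < length \<tau>. col X (\<nu> (\<tau>!i)) = col Y (\<mu> (\<tau>!i)))"
    by (subst atp_eq) auto
  also have "\<dots> \<longleftrightarrow> (\<forall>x\<in>set \<tau>. \<forall>y\<in>set \<tau>. (\<nu> x = \<nu> y \<longleftrightarrow> \<mu> x = \<mu> y) \<and> ({\<nu> x, \<nu> y} \<in> edges X \<longleftrightarrow> {\<mu> x, \<mu> y} \<in> edges Y)) \<and>
   (\<forall>x\<in>set \<tau>. col X (\<nu> x) = col Y (\<mu> x))"
  proof
    assume H: "(\<forall>i j. i < j \<and> j < length \<tau> \<longrightarrow> (\<nu> (\<tau>!i) = \<nu> (\<tau>!j) \<longleftrightarrow> \<mu> (\<tau>!i) = \<mu> (\<tau>!j)) \<and>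
         ({\<nu> (\<tau>!i), \<nu> (\<tau>!j)} \<in> edges X \<longleftrightarrow> {\<mu> (\<tau>!i), \<mu> (\<tau>!j)} \<in> edges Y)) \<and>
    (\<forall>i < length \<tau>. col X (\<nu> (\<tau>!i)) = col Y (\<mu> (\<tau>!i)))"
    have P1: "(\<nu> x = \<nu> y \<longleftrightarrow> \<mu> x = \<mu> y) \<and> ({\<nu> x, \<nu> y} \<in> edges X \<longleftrightarrow> {\<mu> x, \<mu> y} \<in> edges Y)"
      if xy: "x \<in> set \<tau>" "y \<in> set \<tau>" for x y
    proof -
      obtain i j where ij: "i < length \<tau>" "j < length \<tau>" "\<tau>!i = x" "\<tau>!j = y"
        using xy by (auto simp: in_set_conv_nth)
      consider "i < j" | "j < i" | "i = j" by linarith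
      then show ?thesis
      proof cases
        case 1 then show ?thesis using H ij by auto
      next
        case 2 then have "(\<nu> y = \<nu> x \<longleftrightarrow> \<mu> y = \<mu> x) \<and> ({\<nu> y, \<nu> x} \<in> edges X \<longleftrightarrow> {\<mu> y, \<mu> x} \<in> edges Y)"
          using H ij by auto
        then show ?thesis by (auto simp: insert_commute)
      next
        case 3 then show ?thesis using ij no_loop[OF gX] no_loop[OF gY] by auto
      qed
    qed
    have P2: "\<forall>x\<in>set \<tau>. col X (\<nu> x) = col Y (\<mu> x)" using H by (auto simp: in_set_conv_nth)
    show "(\<forall>x\<in>set \<tau>. \<forall>y\<in>set \<tau>. (\<nu> x = \<nu> y \<longleftrightarrow> \<mu> x = \<mu> y) \<and> ({\<nu> x, \<nu> y} \<in> edges X \<longleftrightarrow> {\<mu> x, \<mu> y} \<in> edges Y)) \<and>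
   (\<forall>x\<in>set \<tau>. col X (\<nu> x) = col Y (\<mu> x))" using P1 P2 by blast
  next
    assume H: "(\<forall>x\<in>set \<tau>. \<forall>y\<in>set \<tau>. (\<nu> x = \<nu> y \<longleftrightarrow> \<mu> x = \<mu> y) \<and> ({\<nu> x, \<nu> y} \<in> edges X \<longleftrightarrow> {\<mu> x, \<mu> y} \<in> edges Y)) \<and>
   (\<forall>x\<in>set \<tau>. col X (\<nu> x) = col Y (\<mu> x))"
    show "(\<forall>i j. i < j \<and> j < length \<tau> \<longrightarrow> (\<nu> (\<tau>!i) = \<nu> (\<tau>!j) \<longleftrightarrow> \<mu> (\<tau>!i) = \<mu> (\<tau>!j)) \<and>
         ({\<nu> (\<tau>!i), \<nu> (\<tau>!j)} \<in> edges X \<longleftrightarrow> {\<mu> (\<tau>!i), \<mu> (\<tau>!j)} \<in> edges Y)) \<and>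
    (\<forall>i < length \<tau>. col X (\<nu> (\<tau>!i)) = col Y (\<mu> (\<tau>!i)))"
      using H by (meson nth_mem order.strict_trans)
  qed
  also have "\<dots> \<longleftrightarrow> (\<forall>\<psi>\<in>set (atoms \<tau> l). sem n X \<nu> \<psi> = sem n Y \<mu> \<psi>)"
    unfolding atoms_iff using colq by blast
  finally show ?thesis .
qed

lemma okF_atoms: "\<psi> \<in> set (atoms \<tau> l) \<Longrightarrow> set \<tau> \<subseteq> {1..K} \<Longrightarrow> okF l \<Omega> K (set \<tau>) 0 \<psi>"
  unfolding atoms_def okF_def by auto

lemma wl_atp: "wl n X t xs = wl n Y t ys \<Longrightarrow> atp X xs = atp Y ys"
  by (induction t) auto

lemma bspec2: "\<forall>x\<in>A. \<forall>y\<in>B. P x y \<Longrightarrow> x \<in> A \<Longrightarrow> y \<in> B \<Longrightarrow> P x y" by blast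

lemma ex_atp_ind:
  assumes K: "1 \<le> K" and g: "\<forall>X\<in>GS. is_graph n l X" and fin: "finite GS" and tau: "set \<tau> \<subseteq> {1..K}"
  shows "\<exists>\<phi>. okF l \<Omega> K (set \<tau>) 0 \<phi> \<and>
     (\<forall>X\<in>GS. \<forall>\<nu>\<in>VV K n. sem n X \<nu> \<phi> = (if atp X (map \<nu> \<tau>) = a then 1 else 0))"
proof (cases "\<exists>X0\<in>GS. \<exists>\<nu>0\<in>VV K n. atp X0 (map \<nu>0 \<tau>) = a")
  case True
  then obtain X0 \<nu>0 where X0: "X0 \<in> GS" "\<nu>0 \<in> VV K n" "atp X0 (map \<nu>0 \<tau>) = a" by blast
  have "\<forall>\<psi>\<in>set (atoms \<tau> l). \<exists>\<phi>. okF l \<Omega> K (set \<tau>) 0 \<phi> \<and>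
     (\<forall>X\<in>GS. \<forall>\<nu>\<in>VV K n. sem n X \<nu> \<phi> = (if sem n X \<nu> \<psi> = sem n X0 \<nu>0 \<psi> then 1 else 0))"
    using ex_ind[OF K okF_atoms[OF _ tau] fin] by blast
  then obtain I where I: "\<forall>\<psi>\<in>set (atoms \<tau> l). okF l \<Omega> K (set \<tau>) 0 (I \<psi>) \<and>
     (\<forall>X\<in>GS. \<forall>\<nu>\<in>VV K n. sem n X \<nu> (I \<psi>) = (if sem n X \<nu> \<psi> = sem n X0 \<nu>0 \<psi> then 1 else 0))"
    by (metis bchoice)
  show ?thesis
  proof (intro exI conjI ballI)
    show "okF l \<Omega> K (set \<tau>) 0 (prodL (map I (atoms \<tau> l)))"
      using I K by (auto intro!: okF_prodL)
  next
    fix X \<nu> assume X: "X \<in> GS" and \<nu>: "\<nu> \<in> VV K n"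
    have "sem n X \<nu> (prodL (map I (atoms \<tau> l))) = prod_list (map (\<lambda>\<psi>. sem n X \<nu> (I \<psi>)) (atoms \<tau> l))"
      by (simp add: sem_prodL comp_def)
    also have "\<dots> = prod_list (map (\<lambda>\<psi>. if sem n X \<nu> \<psi> = sem n X0 \<nu>0 \<psi> then 1 else 0) (atoms \<tau> l))"
      by (rule arg_cong[where f=prod_list], rule map_cong[OF refl]) (use I X \<nu> in blast)
    also have "\<dots> = (if \<forall>\<psi>\<in>set (atoms \<tau> l). sem n X \<nu> \<psi> = sem n X0 \<nu>0 \<psi> then 1 else 0)"
      by (rule prod_list_ind)
    also have "\<dots> = (if atp X (map \<nu> \<tau>) = a then 1 else 0)"
    proof -
      have "\<forall>x\<in>set \<tau>. \<nu> x \<in> {1..n}" "\<forall>x\<in>set \<tau>. \<nu>0 x \<in> {1..n}"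
        using \<nu> X0(2) tau unfolding VV_def by blast+
      then show ?thesis using ATP0[of n l X X0 \<tau> \<nu> \<nu>0] g X X0 by simp
    qed
    finally show "sem n X \<nu> (prodL (map I (atoms \<tau> l))) = (if atp X (map \<nu> \<tau>) = a then 1 else 0)" .
  qed
next
  case False
  show ?thesis
    by (rule exI[of _ zero]) (use False okF_zero[OF K] in auto)
qed

lemma map_upt_eq_iff: "length ys = k \<Longrightarrow> (map f [0..<k] = ys) \<longleftrightarrow> (\<forall>i\<in>set [0..<k]. f i = ys ! i)"
proof -
  assume "length ys = k"
  then show ?thesis unfolding list_eq_iff_nth_eq by auto
qed

lemma count_image_mset_set:
  "finite A \<Longrightarrow> count (image_mset f (mset_set A)) e = (\<Sum>u\<in>A. if f u = e then 1 else 0)"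
  by (induction A rule: finite_induct) auto

lemma CHI:
  assumes K: "K = Suc k" and g: "\<forall>X\<in>GS. is_graph n l X" and fin: "finite GS"
  shows "\<forall>c \<sigma>. length \<sigma> = k \<longrightarrow> set \<sigma> \<subseteq> {1..K} \<longrightarrow> (\<exists>\<phi>. okF l \<Omega> K (set \<sigma>) t \<phi> \<and>
     (\<forall>X\<in>GS. \<forall>\<nu>\<in>VV K n. sem n X \<nu> \<phi> = (if wl n X t (map \<nu> \<sigma>) = c then 1 else 0)))"
proof (induction t)
  case 0
  show ?case
  proof (intro allI impI)
    fix c and \<sigma> :: "nat list" assume \<sigma>: "length \<sigma> = k" "set \<sigma> \<subseteq> {1..K}"
    show "\<exists>\<phi>. okF l \<Omega> K (set \<sigma>) 0 \<phi> \<and>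
     (\<forall>X\<in>GS. \<forall>\<nu>\<in>VV K n. sem n X \<nu> \<phi> = (if wl n X 0 (map \<nu> \<sigma>) = c then 1 else 0))"
    proof (cases c)
      case (WLBase a)
      then show ?thesis using ex_atp_ind[of K GS n l \<sigma> \<Omega> a] K g fin \<sigma> by simp
    next
      case (WLStep c0 M)
      then show ?thesis by (intro exI[of _ zero]) (simp add: okF_zero K)
    qed
  qed
next
  case (Suc t)
  have K1: "1 \<le> K" using K by simp
  have "\<forall>p. \<exists>\<phi>. length (snd p) = k \<longrightarrow> set (snd p) \<subseteq> {1..K} \<longrightarrow> okF l \<Omega> K (set (snd p)) t \<phi> \<and>
     (\<forall>X\<in>GS. \<forall>\<nu>\<in>VV K n. sem n X \<nu> \<phi> = (if wl n X t (map \<nu> (snd p)) = fst p then 1 else 0))"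
    using Suc.IH by blast
  then obtain chi0 where chi0: "\<forall>p. length (snd p) = k \<longrightarrow> set (snd p) \<subseteq> {1..K} \<longrightarrow> okF l \<Omega> K (set (snd p)) t (chi0 p) \<and>
     (\<forall>X\<in>GS. \<forall>\<nu>\<in>VV K n. sem n X \<nu> (chi0 p) = (if wl n X t (map \<nu> (snd p)) = fst p then 1 else 0))"
    by (metis choice)
  define chi where "chi c \<sigma> = chi0 (c, \<sigma>)" for c \<sigma>
  have chi: "okF l \<Omega> K (set \<sigma>) t (chi c \<sigma>)"
    "\<And>X \<nu>. X \<in> GS \<Longrightarrow> \<nu> \<in> VV K n \<Longrightarrow> sem n X \<nu> (chi c \<sigma>) = (if wl n X t (map \<nu> \<sigma>) = c then 1 else 0)"
    if "length \<sigma> = k" "set \<sigma> \<subseteq> {1..K}" for c \<sigma>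
    using chi0[rule_format, of "(c, \<sigma>)"] that unfolding chi_def by auto
  show ?case
  proof (intro allI impI)
    fix c and \<sigma> :: "nat list" assume \<sigma>: "length \<sigma> = k" "set \<sigma> \<subseteq> {1..K}"
    show "\<exists>\<phi>. okF l \<Omega> K (set \<sigma>) (Suc t) \<phi> \<and>
     (\<forall>X\<in>GS. \<forall>\<nu>\<in>VV K n. sem n X \<nu> \<phi> = (if wl n X (Suc t) (map \<nu> \<sigma>) = c then 1 else 0))"
    proof (cases c)
      case (WLBase a)
      then show ?thesis by (intro exI[of _ zero]) (simp add: okF_zero K)
    next
      case (WLStep c0 M)
      define f where "f X \<nu> u = (atp X (map \<nu> \<sigma> @ [u]), map (\<lambda>i. wl n X t ((map \<nu> \<sigma>)[i := u])) [0..<length (map \<nu> \<sigma>)])"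
        for X \<nu> u
      define R where "R = (\<lambda>(X,xs,u). (atp X (xs @ [u]), map (\<lambda>i. wl n X t (xs[i := u])) [0..<k])) `
          (GS \<times> {xs. set xs \<subseteq> {1..n} \<and> length xs = k} \<times> {1..n})"
      have finR: "finite R" unfolding R_def using fin by (auto intro!: finite_lists_length_eq)
      have fR: "f X \<nu> u \<in> R" if "X \<in> GS" "\<nu> \<in> VV K n" "u \<in> {1..n}" for X \<nu> u
      proof -
        have "set (map \<nu> \<sigma>) \<subseteq> {1..n}" using that(2) \<sigma>(2) unfolding VV_def by auto
        then show ?thesis unfolding R_def f_def using that \<sigma>(1)
          by (intro image_eqI[where x="(X, map \<nu> \<sigma>, u)"]) auto
      qed
      have lenR: "length (snd e) = k" if "e \<in> R" for e using that unfolding R_def by auto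
      have wlS: "wl n X (Suc t) (map \<nu> \<sigma>) = c \<longleftrightarrow> wl n X t (map \<nu> \<sigma>) = c0 \<and> image_mset (f X \<nu>) (mset_set {1..n}) = M"
        for X \<nu> unfolding WLStep f_def by simp
      show ?thesis
      proof (cases "set_mset M \<subseteq> R")
        case False
        show ?thesis
        proof (intro exI[of _ zero] conjI ballI)
          show "okF l \<Omega> K (set \<sigma>) (Suc t) zero" by (simp add: okF_zero K)
          fix X \<nu> assume X: "X \<in> GS" and \<nu>: "\<nu> \<in> VV K n"
          have "image_mset (f X \<nu>) (mset_set {1..n}) \<noteq> M"
            using False fR[OF X \<nu>] by auto
          then show "sem n X \<nu> zero = (if wl n X (Suc t) (map \<nu> \<sigma>) = c then 1 else 0)"
            using wlS by simp
        qed
      next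
        case True
        obtain z where z: "z \<in> {1..K}" "z \<notin> set \<sigma>"
        proof -
          have "card (set \<sigma>) \<le> k" using \<sigma>(1) card_length by metis
          then have "\<not> {1..K} \<subseteq> set \<sigma>" using K by (metis card_mono card_atLeastAtMost diff_Suc_1 List.finite_set not_less_eq_eq)
          then show ?thesis using that by blast
        qed
        have "\<forall>a. \<exists>\<phi>. okF l \<Omega> K (set (\<sigma> @ [z])) 0 \<phi> \<and>
           (\<forall>X\<in>GS. \<forall>\<nu>\<in>VV K n. sem n X \<nu> \<phi> = (if atp X (map \<nu> (\<sigma> @ [z])) = a then 1 else 0))"
        proof
          fix a
          have "set (\<sigma> @ [z]) \<subseteq> {1..K}" using \<sigma>(2) z(1) by simp
          from ex_atp_ind[OF K1 g fin this, of \<Omega> a]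
          show "\<exists>\<phi>. okF l \<Omega> K (set (\<sigma> @ [z])) 0 \<phi> \<and>
           (\<forall>X\<in>GS. \<forall>\<nu>\<in>VV K n. sem n X \<nu> \<phi> = (if atp X (map \<nu> (\<sigma> @ [z])) = a then 1 else 0))" .
        qed
        then obtain Afn where Afn: "\<forall>a. okF l \<Omega> K (set (\<sigma> @ [z])) 0 (Afn a) \<and>
           (\<forall>X\<in>GS. \<forall>\<nu>\<in>VV K n. sem n X \<nu> (Afn a) = (if atp X (map \<nu> (\<sigma> @ [z])) = a then 1 else 0))"
          by (metis choice)
        define \<psi> where "\<psi> e = prodL (Afn (fst e) # map (\<lambda>i. chi (snd e ! i) (\<sigma>[i := z])) [0..<k])" for e
        have \<sigma>i: "length (\<sigma>[i := z]) = k" "set (\<sigma>[i := z]) \<subseteq> {1..K}" for i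
          using \<sigma> z set_update_subset_insert[of \<sigma> i z] by auto
        have ok\<psi>: "okF l \<Omega> K (insert z (set \<sigma>)) t (\<psi> e)" for e
          unfolding \<psi>_def
        proof (rule okF_prodL[OF K1])
          fix b assume "b \<in> set (Afn (fst e) # map (\<lambda>i. chi (snd e ! i) (\<sigma>[i := z])) [0..<k])"
          then consider "b = Afn (fst e)" | i where "b = chi (snd e ! i) (\<sigma>[i := z])" by auto
          then show "okF l \<Omega> K (insert z (set \<sigma>)) t b"
          proof cases
            case 1
            have "okF l \<Omega> K (set (\<sigma> @ [z])) 0 (Afn (fst e))" using Afn by blast
            then show ?thesis using 1 by (auto elim!: okF_mono)
          next
            case 2
            have "okF l \<Omega> K (set (\<sigma>[i := z])) t (chi (snd e ! i) (\<sigma>[i := z]))" using chi(1)[OF \<sigma>i] .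
            then show ?thesis using 2 set_update_subset_insert[of \<sigma> i z] okF_mono by blast
          qed
        qed
        have sem\<psi>: "sem n X (\<nu>(z := u)) (\<psi> e) = (if f X \<nu> u = e then 1 else 0)"
          if X: "X \<in> GS" and \<nu>: "\<nu> \<in> VV K n" and u: "u \<in> {1..n}" and e: "e \<in> R" for X \<nu> u e
        proof -
          let ?\<nu> = "\<nu>(z := u)"
          have \<nu>': "?\<nu> \<in> VV K n" using VV_upd[OF \<nu> u] .
          have m\<sigma>: "map ?\<nu> \<sigma> = map \<nu> \<sigma>" using z(2) by (auto intro!: map_cong)
          have m1: "map ?\<nu> (\<sigma> @ [z]) = map \<nu> \<sigma> @ [u]" using m\<sigma> by simp
          have m2: "map ?\<nu> (\<sigma>[i := z]) = (map \<nu> \<sigma>)[i := u]" for i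
            by (simp only: map_update m\<sigma>) simp
          have "sem n X ?\<nu> (\<psi> e) = sem n X ?\<nu> (Afn (fst e)) * prod_list (map (\<lambda>i. sem n X ?\<nu> (chi (snd e ! i) (\<sigma>[i := z]))) [0..<k])"
            unfolding \<psi>_def by (simp add: sem_prodL comp_def)
          also have "\<dots> = (if atp X (map \<nu> \<sigma> @ [u]) = fst e then 1 else 0) *
               prod_list (map (\<lambda>i. if wl n X t ((map \<nu> \<sigma>)[i := u]) = snd e ! i then 1 else 0) [0..<k])"
          proof -
            have "map (\<lambda>i. sem n X ?\<nu> (chi (snd e ! i) (\<sigma>[i := z]))) [0..<k] =
                  map (\<lambda>i. if wl n X t ((map \<nu> \<sigma>)[i := u]) = snd e ! i then 1 else 0) [0..<k]"
              using chi(2)[OF \<sigma>i X \<nu>'] m2 by simp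
            moreover have A1: "sem n X ?\<nu> (Afn (fst e)) = (if atp X (map ?\<nu> (\<sigma>@[z])) = fst e then 1 else 0)"
              using Afn[rule_format, of "fst e", THEN conjunct2] X \<nu>' by (rule bspec2)
            ultimately show ?thesis by (simp only: A1[unfolded m1])
          qed
          also have "\<dots> = (if f X \<nu> u = e then 1 else 0)"
          proof -
            have iff: "map (\<lambda>i. wl n X t ((map \<nu> \<sigma>)[i := u])) [0..<k] = snd e \<longleftrightarrow>
                (\<forall>i\<in>set [0..<k]. wl n X t ((map \<nu> \<sigma>)[i := u]) = snd e ! i)"
              by (rule map_upt_eq_iff[OF lenR[OF e]])
            have "f X \<nu> u = e \<longleftrightarrow> atp X (map \<nu> \<sigma> @ [u]) = fst e \<and>
                (\<forall>i\<in>set [0..<k]. wl n X t ((map \<nu> \<sigma>)[i := u]) = snd e ! i)"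
              by (simp only: f_def length_map \<sigma>(1) prod_eq_iff fst_conv snd_conv iff)
            then show ?thesis unfolding prod_list_ind by simp
          qed
          finally show ?thesis .
        qed
        define cnt where "cnt e = Sum z (\<psi> e)" for e
        have okcnt: "okF l \<Omega> K (set \<sigma>) (Suc t) (cnt e)" for e
          unfolding cnt_def using okF_Sum[OF ok\<psi> z(1)] .
        have semcnt: "sem n X \<nu> (cnt e) = real (count (image_mset (f X \<nu>) (mset_set {1..n})) e)"
          if X: "X \<in> GS" and \<nu>: "\<nu> \<in> VV K n" and e: "e \<in> R" for X \<nu> e
        proof -
          have "sem n X \<nu> (cnt e) = (\<Sum>u\<in>{1..n}. if f X \<nu> u = e then 1 else 0)"
            unfolding cnt_def using sem\<psi>[OF X \<nu> _ e] by simp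
          also have "\<dots> = real (\<Sum>u\<in>{1..n}. if f X \<nu> u = e then 1 else 0)"
            unfolding of_nat_sum by (rule sum.cong) auto
          finally show ?thesis by (simp add: count_image_mset_set)
        qed
        have exI_: "\<forall>e\<in>R. \<exists>\<phi>. okF l \<Omega> K (set \<sigma>) (Suc t) \<phi> \<and>
           (\<forall>X\<in>GS. \<forall>\<nu>\<in>VV K n. sem n X \<nu> \<phi> = (if sem n X \<nu> (cnt e) = real (count M e) then 1 else 0))"
          using ex_ind[OF K1 okcnt fin] by blast
        obtain Ind where Ind: "\<forall>e\<in>R. okF l \<Omega> K (set \<sigma>) (Suc t) (Ind e) \<and>
           (\<forall>X\<in>GS. \<forall>\<nu>\<in>VV K n. sem n X \<nu> (Ind e) = (if sem n X \<nu> (cnt e) = real (count M e) then 1 else 0))"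
          using bchoice[OF exI_] by (elim exE) (erule that)
        obtain Rl where Rl: "set Rl = R" using finite_list[OF finR] by blast
        show ?thesis
        proof (intro exI[of _ "prodL (chi c0 \<sigma> # map Ind Rl)"] conjI ballI)
          show "okF l \<Omega> K (set \<sigma>) (Suc t) (prodL (chi c0 \<sigma> # map Ind Rl))"
          proof (rule okF_prodL[OF K1])
            fix b assume "b \<in> set (chi c0 \<sigma> # map Ind Rl)"
            then show "okF l \<Omega> K (set \<sigma>) (Suc t) b"
              using chi(1)[OF \<sigma>, of c0] Ind Rl by (auto elim!: okF_mono)
          qed
        next
          fix X \<nu> assume X: "X \<in> GS" and \<nu>: "\<nu> \<in> VV K n"
          let ?m = "image_mset (f X \<nu>) (mset_set {1..n})"
          have "sem n X \<nu> (prodL (chi c0 \<sigma> # map Ind Rl)) =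
             (if wl n X t (map \<nu> \<sigma>) = c0 then 1 else 0) * prod_list (map (\<lambda>e. sem n X \<nu> (Ind e)) Rl)"
            using chi(2)[OF \<sigma> X \<nu>] by (simp add: sem_prodL comp_def)
          also have "map (\<lambda>e. sem n X \<nu> (Ind e)) Rl = map (\<lambda>e. if count ?m e = count M e then 1 else 0) Rl"
            using Ind Rl semcnt[OF X \<nu>] X \<nu> by (auto intro!: map_cong)
          also have "prod_list \<dots> = (if \<forall>e\<in>R. count ?m e = count M e then 1 else 0)"
            unfolding prod_list_ind Rl ..
          also have "(\<forall>e\<in>R. count ?m e = count M e) \<longleftrightarrow> ?m = M"
          proof
            assume H: "\<forall>e\<in>R. count ?m e = count M e"
            have "count ?m e = count M e" for e
            proof (cases "e \<in> R")
              case False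
              then have "e \<notin># ?m" using fR[OF X \<nu>] by auto
              moreover have "e \<notin># M" using False True by auto
              ultimately show ?thesis by (metis not_in_iff)
            qed (use H in auto)
            then show "?m = M" by (simp add: multiset_eq_iff)
          qed simp
          finally show "sem n X \<nu> (prodL (chi c0 \<sigma> # map Ind Rl)) = (if wl n X (Suc t) (map \<nu> \<sigma>) = c then 1 else 0)"
            unfolding wlS by simp
        qed
      qed
    qed
  qed
qed

lemma atp_rep:
  assumes gX: "is_graph n l X" and gY: "is_graph n l Y" and c: "col X v = col Y w"
  shows "atp X (replicate m v) = atp Y (replicate m w)"
  using no_loop[OF gX, of v] no_loop[OF gY, of w] c by (subst atp_eq) auto

lemma snd_atp: "snd (atp G vs) = map (col G) vs" by (simp add: atp_def)

lemma col_from_wl: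
  assumes "wl n X t (replicate k v) = wl n Y t (replicate k w)" "1 \<le> k"
  shows "col X v = col Y w"
proof -
  have "atp X (replicate k v) = atp Y (replicate k w)" using wl_atp[OF assms(1)] .
  then have "snd (atp X (replicate k v)) = snd (atp Y (replicate k w))" by (rule arg_cong)
  then have "replicate k (col X v) = replicate k (col Y w)" by (simp only: snd_atp map_replicate)
  then have "hd (replicate k (col X v)) = hd (replicate k (col Y w))" by (rule arg_cong)
  then show ?thesis using assms(2) by simp
qed

lemma dirA:
  assumes gX: "is_graph n l X" and gY: "is_graph n l Y" and k: "1 \<le> k"
    and eq: "wl n X t (replicate k v) = wl n Y t (replicate k w)"
    and \<phi>: "\<phi> \<in> TL l \<Omega> (k + 1) t"
  shows "sem n X (\<lambda>_. v) \<phi> = sem n Y (\<lambda>_. w) \<phi>"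
proof -
  have c: "col X v = col Y w" using col_from_wl[OF eq k] .
  have "EQ n X Y (k+1) t (\<lambda>_. v) (\<lambda>_. w)"
    unfolding EQ_def
  proof (intro conjI ballI)
    show "atp X (map (\<lambda>_. v) [1..<Suc (k + 1)]) = atp Y (map (\<lambda>_. w) [1..<Suc (k + 1)])"
      using atp_rep[OF gX gY c, of "length [1..<Suc (k+1)]"] unfolding map_replicate_const .
  next
    fix j assume j: "j \<in> {1..k+1}"
    have "length (Dl (k+1) j) = k" using Dl_length[OF j] by simp
    then show "wl n X t (map (\<lambda>_. v) (Dl (k + 1) j)) = wl n Y t (map (\<lambda>_. w) (Dl (k + 1) j))"
      unfolding map_replicate_const using eq by simp
  qed
  then show ?thesis using main_A[OF gX gY] \<phi> unfolding TL_def by blast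
qed

lemma dirB:
  assumes gX: "is_graph n l X" and gY: "is_graph n l Y" and k: "1 \<le> k"
    and v: "v \<in> {1..n}" and w: "w \<in> {1..n}"
    and ne: "wl n X t (replicate k v) \<noteq> wl n Y t (replicate k w)"
  shows "\<exists>\<phi>\<in>TL l \<Omega> (k + 1) t. free_vars \<phi> \<subseteq> {1} \<and> sem n X (\<lambda>_. v) \<phi> \<noteq> sem n Y (\<lambda>_. w) \<phi>"
proof -
  have g: "\<forall>X'\<in>{X, Y}. is_graph n l X'" using gX gY by auto
  have \<sigma>: "length (replicate k (1::nat)) = k" "set (replicate k (1::nat)) \<subseteq> {1..Suc k}" by auto
  obtain \<phi> where ok: "okF l \<Omega> (Suc k) (set (replicate k (1::nat))) t \<phi>"
    and sem: "\<forall>X'\<in>{X, Y}. \<forall>\<nu>\<in>VV (Suc k) n. sem n X' \<nu> \<phi> =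
       (if wl n X' t (map \<nu> (replicate k 1)) = wl n X t (replicate k v) then 1 else 0)"
    using CHI[OF refl g, where \<Omega>=\<Omega> and t=t, rule_format, OF _ \<sigma>] by blast
  have s1: "set (replicate k (1::nat)) = {1}" using k by simp
  have vv: "(\<lambda>_. v) \<in> VV (Suc k) n" "(\<lambda>_. w) \<in> VV (Suc k) n" using v w by (auto simp: VV_def)
  have "sem n X (\<lambda>_. v) \<phi> = 1" using sem vv(1) by simp
  moreover have "sem n Y (\<lambda>_. w) \<phi> = 0" using sem vv(2) ne by (simp add: map_replicate_const)
  moreover have "\<phi> \<in> TL l \<Omega> (k + 1) t" "free_vars \<phi> \<subseteq> {1}"
    using ok s1 unfolding okF_def TL_def by auto
  ultimately show ?thesis by force
qed

theorem theorem2: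
  fixes n l k t :: nat and \<Omega> :: "(nat \<times> (real list \<Rightarrow> real)) set"
  assumes "n \<ge> 1" and "l \<ge> 1" and "k \<ge> 1"
    and "\<forall>(p, f)\<in>\<Omega>. p \<ge> 1"
  shows "rho1_vwl n l k t = rho1_TL n l (TL l \<Omega> (k + 1) t)"
proof (rule set_eqI)
  fix p :: "(graph \<times> nat) \<times> (graph \<times> nat)"
  obtain G v H w where p: "p = ((G, v), (H, w))" by (metis prod.collapse)
  show "p \<in> rho1_vwl n l k t \<longleftrightarrow> p \<in> rho1_TL n l (TL l \<Omega> (k + 1) t)"
  proof
    assume "p \<in> rho1_vwl n l k t"
    then have h: "is_graph n l G" "is_graph n l H" "v \<in> {1..n}" "w \<in> {1..n}"
      "wl n G t (replicate k v) = wl n H t (replicate k w)"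
      unfolding p rho1_vwl_def vwl_def by auto
    show "p \<in> rho1_TL n l (TL l \<Omega> (k + 1) t)"
      unfolding p rho1_TL_def using h dirA[OF h(1,2) assms(3) h(5)] by auto
  next
    assume "p \<in> rho1_TL n l (TL l \<Omega> (k + 1) t)"
    then have h: "is_graph n l G" "is_graph n l H" "v \<in> {1..n}" "w \<in> {1..n}"
      "\<forall>\<phi>\<in>TL l \<Omega> (k + 1) t. free_vars \<phi> \<subseteq> {1} \<longrightarrow> sem n G (\<lambda>_. v) \<phi> = sem n H (\<lambda>_. w) \<phi>"
      unfolding p rho1_TL_def by auto
    have "wl n G t (replicate k v) = wl n H t (replicate k w)"
      using dirB[OF h(1,2) assms(3) h(3,4), of t \<Omega>] assms(3) h(5) by blast
    then show "p \<in> rho1_vwl n l k t"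
      unfolding p rho1_vwl_def vwl_def using h by auto
  qed
qed

end
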